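(* Let $p\ge3$ be an odd integer, let $k\ge1$, let $U$ be the uniform distribution on the subset $\{0,1\}\subset\mathbb{F}_p$, and let $D$ be a probability distribution on $\mathbb{F}_p^k$ such that $|D(x)-p^{-k}|\le p^{-2k}$ for each $x\in\mathbb{F}_p^k$. Then there exists a probability distribution $E$ on $\mathbb{F}_p^k$ such that $D=U^k+E$.
   Context: $U^k$ is the product distribution on $\mathbb{F}_p^k$ with independent coordinates distributed according to $U$. For distributions $D',D''$ on $\mathbb{F}_p^k$, $D'+D''$ is their convolution: $(D'+D'')(x)=\sum_{y+z=x}D'(y)D''(z)$. Here $\mathbb{F}_p$ denotes $\mathbb{Z}/p\mathbb{Z}$. *)

theory Defs
  imports Complex_Main
begin

text \<open>Elements of F_p^k are modelled as functions nat => nat with coordinates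
  x i in {0..<p} for i < k and x i = 0 for i >= k (canonical representatives of Z/pZ).\<close>

definition vecs :: "nat \<Rightarrow> nat \<Rightarrow> (nat \<Rightarrow> nat) set" where
  "vecs p k = {x. (\<forall>i<k. x i < p) \<and> (\<forall>i\<ge>k. x i = 0)}"

definition vadd :: "nat \<Rightarrow> nat \<Rightarrow> (nat \<Rightarrow> nat) \<Rightarrow> (nat \<Rightarrow> nat) \<Rightarrow> (nat \<Rightarrow> nat)" where
  "vadd p k x y = (\<lambda>i. if i < k then (x i + y i) mod p else 0)"

definition is_distr :: "nat \<Rightarrow> nat \<Rightarrow> ((nat \<Rightarrow> nat) \<Rightarrow> real) \<Rightarrow> bool" where
  "is_distr p k D \<longleftrightarrow> (\<forall>x\<in>vecs p k. D x \<ge> 0) \<and> (\<Sum>x\<in>vecs p k. D x) = 1"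

definition conv :: "nat \<Rightarrow> nat \<Rightarrow> ((nat \<Rightarrow> nat) \<Rightarrow> real) \<Rightarrow> ((nat \<Rightarrow> nat) \<Rightarrow> real)
    \<Rightarrow> (nat \<Rightarrow> nat) \<Rightarrow> real" where
  "conv p k D1 D2 x = (\<Sum>y\<in>vecs p k. \<Sum>z\<in>vecs p k. if vadd p k y z = x then D1 y * D2 z else 0)"

definition U01 :: "nat \<Rightarrow> real" where
  "U01 a = (if a \<in> {0, 1} then 1/2 else 0)"

definition prod_distr :: "nat \<Rightarrow> (nat \<Rightarrow> real) \<Rightarrow> (nat \<Rightarrow> nat) \<Rightarrow> real" where
  "prod_distr k U x = (\<Prod>i<k. U (x i))"

end

theory Submission
  imports Defs
begin

lemma key: fixes a b p :: nat assumes "b \<le> p" shows "int ((a + p - b) mod p) = (int a - int b) mod int p"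
proof -
  have "int ((a + p - b) mod p) = int (a + p - b) mod int p" by (simp add: zmod_int)
  also have "\<dots> = (int a - int b + int p) mod int p" using assms by (simp add: of_nat_diff algebra_simps)
  also have "\<dots> = (int a - int b) mod int p" by simp
  finally show ?thesis .
qed
lemma keyadd: fixes a b p :: nat shows "int ((a + b) mod p) = (int a + int b) mod int p" by (simp add: zmod_int)
lemma small: fixes a p :: nat assumes "a < p" shows "int a = int a mod int p" using assms by simp

lemma l1: fixes a b c p :: nat assumes "a<p" "b<p" "c<p" shows "(b + c) mod p = a \<longleftrightarrow> c = (a + p - b) mod p"
proof -
  have "(b + c) mod p = a \<longleftrightarrow> (int b + int c) mod int p = int a" by (metis keyadd of_nat_eq_iff)
  also have "\<dots> \<longleftrightarrow> int c = (int a - int b) mod int p"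
  proof
    assume h: "(int b + int c) mod int p = int a"
    have "int c = (int b + int c - int b) mod int p" using small[OF assms(3)] by simp
    also have "\<dots> = ((int b + int c) mod int p - int b) mod int p" by (simp add: mod_simps)
    finally show "int c = (int a - int b) mod int p" using h by simp
  next
    assume h: "int c = (int a - int b) mod int p"
    have "(int b + int c) mod int p = (int b + (int a - int b)) mod int p" using h by (simp add: mod_simps)
    then show "(int b + int c) mod int p = int a" using small[OF assms(1)] by simp
  qed
  also have "\<dots> \<longleftrightarrow> c = (a + p - b) mod p" using key[of b p a] assms by (metis of_nat_eq_iff less_imp_le)
  finally show ?thesis .
qed
lemma l2: fixes a b w p :: nat assumes "b<p" "w<p" shows "((a+p-b) mod p + p - w) mod p = (a + p - (b+w) mod p) mod p"
proof -
  have "int (((a+p-b) mod p + p - w) mod p) = ((int a - int b) mod int p - int w) mod int p" using assms by (simp add: key)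
  also have "\<dots> = (int a - (int b + int w) mod int p) mod int p" by (simp add: mod_simps algebra_simps)
  also have "\<dots> = int ((a + p - (b+w) mod p) mod p)" 
    by (metis key keyadd less_imp_le_nat assms mod_less_divisor gr_implies_not0 neq0_conv)
  finally show ?thesis by (metis of_nat_eq_iff)
qed
lemma l3: fixes b w p :: nat assumes "w<p" "b<p" shows "((b+w) mod p + p - b) mod p = w" 
proof -
  have "int (((b+w) mod p + p - b) mod p) = ((int b + int w) mod int p - int b) mod int p" using assms
    by (simp add: key keyadd)
  also have "\<dots> = int w" using small[OF assms(1)] by (simp add: mod_simps)
  finally show ?thesis by (metis of_nat_eq_iff)
qed
lemma l4: fixes b v p :: nat assumes "v<p" "b<p" shows "(b + (v+p-b) mod p) mod p = v" 
proof -
  have "int ((b + (v+p-b) mod p) mod p) = (int b + (int v - int b) mod int p) mod int p" using assms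
    by (simp add: key keyadd)
  also have "\<dots> = int v" using small[OF assms(1)] by (simp add: mod_simps)
  finally show ?thesis by (metis of_nat_eq_iff)
qed
lemma l6: fixes z w p :: nat assumes "z<p" "w<p" shows "((z+p-w) mod p + w) mod p = z" 
  using l4[OF assms] by (simp add: add.commute)

definition vsub :: "nat \<Rightarrow> nat \<Rightarrow> (nat \<Rightarrow> nat) \<Rightarrow> (nat \<Rightarrow> nat) \<Rightarrow> (nat \<Rightarrow> nat)" where
  "vsub p k x y = (\<lambda>i. if i < k then (x i + p - y i) mod p else 0)"

lemma vecs_Suc_sum:
  "(\<Sum>z\<in>vecs p (Suc k). h z) = (\<Sum>z\<in>vecs p k. \<Sum>c<p. h (z(k:=c)))"
  unfolding sum.cartesian_product
by (rule sum.reindex_bij_witness[where i="\<lambda>(z,c). z(k:=c)" and j="\<lambda>z. (z(k:=0), z k)"])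
   (auto simp: vecs_def less_Suc_eq fun_eq_iff)

lemma vecs_0: "vecs p 0 = {\<lambda>_. 0}"
  by (auto simp: vecs_def)

lemma finite_vecs: "finite (vecs p k)"
proof (induction k)
  case 0 then show ?case by (simp add: vecs_0)
next
  case (Suc k)
  have "vecs p (Suc k) \<subseteq> (\<lambda>(z,c). z(k:=c)) ` (vecs p k \<times> {..<p})"
  proof
    fix a assume "a \<in> vecs p (Suc k)"
    then have "a = (\<lambda>(z,c). z(k:=c)) (a(k:=0), a k)" "(a(k:=0), a k) \<in> vecs p k \<times> {..<p}"
      by (auto simp: vecs_def)
    then show "a \<in> (\<lambda>(z,c). z(k:=c)) ` (vecs p k \<times> {..<p})" by blast
  qed
  then show ?case using Suc by (meson finite_SigmaI finite_imageI finite_lessThan finite_subset)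
qed

lemma sum_prod_vecs:
  "(\<Sum>z\<in>vecs p k. \<Prod>i<k. G i (z i)) = (\<Prod>i<k. \<Sum>c<p. (G i c :: real))"
proof (induction k)
  case 0 then show ?case by (simp add: vecs_0)
next
  case (Suc k)
  have "(\<Sum>z\<in>vecs p (Suc k). \<Prod>i<Suc k. G i (z i))
      = (\<Sum>z\<in>vecs p k. \<Sum>c<p. \<Prod>i<Suc k. G i ((z(k:=c)) i))"
    by (rule vecs_Suc_sum)
  also have "\<dots> = (\<Sum>z\<in>vecs p k. \<Sum>c<p. (\<Prod>i<k. G i (z i)) * G k c)"
    by (intro sum.cong refl) (auto simp: lessThan_Suc intro!: prod.cong)
  also have "\<dots> = (\<Sum>z\<in>vecs p k. \<Prod>i<k. G i (z i)) * (\<Sum>c<p. G k c)"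
    by (rule sum_product[symmetric])
  also have "\<dots> = (\<Prod>i<Suc k. \<Sum>c<p. G i c)" using Suc by simp
  finally show ?case .
qed

lemma card_vecs: "card (vecs p k) = p ^ k"
proof -
  have "real (card (vecs p k)) = (\<Sum>z\<in>vecs p k. \<Prod>i<k. (\<lambda>i c. 1::real) i (z i))" by simp
  also have "\<dots> = real p ^ k" by (subst sum_prod_vecs) simp
  finally show ?thesis by (metis of_nat_eq_iff of_nat_power)
qed


lemma vadd_in: "p > 0 \<Longrightarrow> vadd p k x y \<in> vecs p k"
  by (auto simp: vadd_def vecs_def)

lemma vsub_in: "p > 0 \<Longrightarrow> vsub p k x y \<in> vecs p k"
  by (auto simp: vsub_def vecs_def)

lemma vadd_comm: "vadd p k x y = vadd p k y x"
  by (auto simp: vadd_def add.commute)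

lemma vsub_zero: "x \<in> vecs p k \<Longrightarrow> vsub p k x (\<lambda>_. 0) = x"
  by (auto simp: vsub_def vecs_def fun_eq_iff)

lemma vadd_eq_iff:
  assumes "x \<in> vecs p k" "y \<in> vecs p k" "z \<in> vecs p k"
  shows "vadd p k y z = x \<longleftrightarrow> z = vsub p k x y"
proof -
  have A: "vadd p k y z = x \<longleftrightarrow> (\<forall>i<k. (y i + z i) mod p = x i)"
  proof
    assume "vadd p k y z = x" then show "\<forall>i<k. (y i + z i) mod p = x i" by (auto simp: vadd_def)
  next
    assume h: "\<forall>i<k. (y i + z i) mod p = x i"
    show "vadd p k y z = x"
    proof
      fix i show "vadd p k y z i = x i" using h assms(1) by (cases "i < k") (auto simp: vadd_def vecs_def)
    qed
  qed
  have B: "z = vsub p k x y \<longleftrightarrow> (\<forall>i<k. z i = (x i + p - y i) mod p)"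
  proof
    assume "z = vsub p k x y" then show "\<forall>i<k. z i = (x i + p - y i) mod p" by (auto simp: vsub_def)
  next
    assume h: "\<forall>i<k. z i = (x i + p - y i) mod p"
    show "z = vsub p k x y"
    proof
      fix i show "z i = vsub p k x y i" using h assms(3) by (cases "i < k") (auto simp: vsub_def vecs_def)
    qed
  qed
  have C: "(y i + z i) mod p = x i \<longleftrightarrow> z i = (x i + p - y i) mod p" if "i < k" for i
    using assms that by (intro l1) (auto simp: vecs_def)
  show ?thesis unfolding A B using C by blast
qed

lemma vsub_vsub:
  assumes "x \<in> vecs p k" "y \<in> vecs p k" "w \<in> vecs p k"
  shows "vsub p k (vsub p k x y) w = vsub p k x (vadd p k y w)"
proof
  fix i show "vsub p k (vsub p k x y) w i = vsub p k x (vadd p k y w) i"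
  proof (cases "i < k")
    case True
    then have "y i < p" "w i < p" using assms by (auto simp: vecs_def)
    then show ?thesis using True l2[of "y i" p "w i" "x i"] by (simp add: vsub_def vadd_def)
  qed (simp add: vsub_def)
qed

lemma vsub_vadd:
  assumes "y \<in> vecs p k" "w \<in> vecs p k"
  shows "vsub p k (vadd p k y w) y = w"
proof
  fix i show "vsub p k (vadd p k y w) y i = w i"
  proof (cases "i < k")
    case True
    then have "y i < p" "w i < p" using assms by (auto simp: vecs_def)
    then show ?thesis using True l3[of "w i" p "y i"] by (simp add: vsub_def vadd_def)
  qed (use assms in \<open>simp add: vsub_def vecs_def\<close>)
qed

lemma vadd_vsub:
  assumes "y \<in> vecs p k" "v \<in> vecs p k"
  shows "vadd p k y (vsub p k v y) = v"
proof
  fix i show "vadd p k y (vsub p k v y) i = v i"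
  proof (cases "i < k")
    case True
    then have "y i < p" "v i < p" using assms by (auto simp: vecs_def)
    then show ?thesis using True l4[of "v i" p "y i"] by (simp add: vsub_def vadd_def)
  qed (use assms in \<open>simp add: vadd_def vecs_def\<close>)
qed

lemma conv_alt:
  assumes "p > 0" "x \<in> vecs p k"
  shows "conv p k A B x = (\<Sum>y\<in>vecs p k. A y * B (vsub p k x y))"
  unfolding conv_def
proof (rule sum.cong[OF refl])
  fix y assume y: "y \<in> vecs p k"
  have "(\<Sum>z\<in>vecs p k. if vadd p k y z = x then A y * B z else 0)
      = (\<Sum>z\<in>vecs p k. if z = vsub p k x y then A y * B z else 0)"
    by (rule sum.cong[OF refl]) (simp add: vadd_eq_iff[OF assms(2) y])
  also have "\<dots> = A y * B (vsub p k x y)"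
    using vsub_in[OF assms(1)] finite_vecs by (simp add: sum.delta')
  finally show "(\<Sum>z\<in>vecs p k. if vadd p k y z = x then A y * B z else 0) = A y * B (vsub p k x y)" .
qed

lemma alt_sum_odd: "(\<Sum>a<2*m+1. (-1::real)^a) = 1"
  by (induction m) (auto simp: lessThan_Suc)

lemma alt_sum: "odd p \<Longrightarrow> (\<Sum>a<p. (-1::real)^a) = 1"
proof -
  assume "odd p"
  then obtain m where "p = 2*m+1" by (rule oddE)
  then show ?thesis using alt_sum_odd[of m] by simp
qed

lemma sum_U01:
  assumes "p \<ge> 3"
  shows "(\<Sum>a<p. U01 a * h a) = (h 0 + h 1) / 2"
proof -
  have "(\<Sum>a<p. U01 a * h a) = (\<Sum>a\<in>{0,1}. U01 a * h a)"
    using assms by (intro sum.mono_neutral_right) (auto simp: U01_def)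
  also have "\<dots> = (h 0 + h 1) / 2" by (simp add: U01_def)
  finally show ?thesis .
qed

lemma one_dim:
  assumes "p \<ge> 3" "odd p" "c < p"
  shows "(\<Sum>a<p. U01 a * (-1::real) ^ ((c + p - a) mod p)) = (if c = 0 then 1 else 0)"
proof -
  have "(\<Sum>a<p. U01 a * (-1::real) ^ ((c + p - a) mod p))
       = ((-1::real) ^ ((c + p) mod p) + (-1) ^ ((c + p - 1) mod p)) / 2"
    by (subst sum_U01[OF assms(1)]) simp
  also have "\<dots> = (if c = 0 then 1 else 0)"
  proof (cases c)
    case 0
    have "(p - 1) mod p = p - 1" using assms by simp
    moreover have "even (p - 1)" using assms by simp
    ultimately show ?thesis using 0 by simp
  next
    case (Suc c')
    have "(c + p - 1) mod p = c'" using assms Suc by simp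
    moreover have "(c + p) mod p = c" using assms by simp
    ultimately show ?thesis using Suc by simp
  qed
  finally show ?thesis .
qed

lemma prod_delta:
  assumes "v \<in> vecs p k"
  shows "(\<Prod>i<k. (if v i = 0 then 1 else 0::real)) = (if v = (\<lambda>_. 0) then 1 else 0)"
proof (cases "v = (\<lambda>_. 0)")
  case True then show ?thesis by simp
next
  case False
  then obtain j where "v j \<noteq> 0" by auto
  moreover have "\<forall>i\<ge>k. v i = 0" using assms by (simp add: vecs_def)
  ultimately have "j < k" by (meson not_le)
  moreover note \<open>v j \<noteq> 0\<close>
  ultimately have "(\<Prod>i<k. (if v i = 0 then 1 else 0::real)) = 0"
    by (intro prod_zero) auto
  then show ?thesis using False by simp
qed

lemma conv_UG:
  assumes "p \<ge> 3" "odd p" "v \<in> vecs p k"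
  shows "conv p k (prod_distr k U01) (prod_distr k (\<lambda>a. (-1::real)^a)) v = (if v = (\<lambda>_. 0) then 1 else 0)"
proof -
  have p0: "p > 0" using assms by simp
  have "conv p k (prod_distr k U01) (prod_distr k (\<lambda>a. (-1::real)^a)) v
     = (\<Sum>y\<in>vecs p k. \<Prod>i<k. U01 (y i) * (-1::real) ^ ((v i + p - y i) mod p))"
    unfolding conv_alt[OF p0 assms(3)] prod_distr_def
    by (intro sum.cong refl) (simp add: prod.distrib vsub_def)
  also have "\<dots> = (\<Prod>i<k. \<Sum>a<p. U01 a * (-1::real) ^ ((v i + p - a) mod p))"
    by (rule sum_prod_vecs)
  also have "\<dots> = (\<Prod>i<k. (if v i = 0 then 1 else 0::real))"
    using assms by (intro prod.cong refl one_dim) (auto simp: vecs_def)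
  also have "\<dots> = (if v = (\<lambda>_. 0) then 1 else 0)" by (rule prod_delta[OF assms(3)])
  finally show ?thesis .
qed


theorem lemma4p1:
  fixes p k :: nat and D :: "(nat \<Rightarrow> nat) \<Rightarrow> real"
  assumes "p \<ge> 3" and "odd p" and "k \<ge> 1"
    and "is_distr p k D"
    and "\<forall>x\<in>vecs p k. \<bar>D x - 1 / real p ^ k\<bar> \<le> 1 / real p ^ (2 * k)"
  shows "\<exists>E. is_distr p k E \<and> (\<forall>x\<in>vecs p k. D x = conv p k (prod_distr k U01) E x)"
proof -
  define V where "V = vecs p k"
  define G where "G = prod_distr k (\<lambda>a. (-1::real)^a)"
  define U where "U = prod_distr k U01"
  define E where "E = (\<lambda>z. \<Sum>w\<in>V. G w * D (vsub p k z w))"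
  have p0: "p > 0" using assms by simp
  have fin: "finite V" unfolding V_def by (rule finite_vecs)
  have sumG: "(\<Sum>w\<in>V. G w) = 1"
    unfolding V_def G_def prod_distr_def using sum_prod_vecs[where p=p and k=k and G="\<lambda>i a. (-1::real)^a"] by (simp add: alt_sum[OF assms(2)])
  have absG: "\<bar>G w\<bar> = 1" for w unfolding G_def prod_distr_def by (simp add: abs_prod)
  have sumD: "(\<Sum>x\<in>V. D x) = 1" using assms(4) unfolding is_distr_def V_def by simp
  have nonneg: "E z \<ge> 0" if z: "z \<in> V" for z
  proof -
    define c where "c = 1 / real p ^ k"
    have "E z = (\<Sum>w\<in>V. G w * c) + (\<Sum>w\<in>V. G w * (D (vsub p k z w) - c))"
      unfolding E_def by (simp add: sum.distrib[symmetric] algebra_simps)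
    also have "(\<Sum>w\<in>V. G w * c) = c" using sumG by (simp add: sum_distrib_right[symmetric])
    finally have eq: "E z = c + (\<Sum>w\<in>V. G w * (D (vsub p k z w) - c))" .
    have "\<bar>\<Sum>w\<in>V. G w * (D (vsub p k z w) - c)\<bar> \<le> (\<Sum>w\<in>V. \<bar>G w * (D (vsub p k z w) - c)\<bar>)"
      by (rule sum_abs)
    also have "\<dots> \<le> (\<Sum>w\<in>V. 1 / real p ^ (2 * k))"
    proof (rule sum_mono)
      fix w assume "w \<in> V"
      have "vsub p k z w \<in> vecs p k" by (rule vsub_in[OF p0])
      then show "\<bar>G w * (D (vsub p k z w) - c)\<bar> \<le> 1 / real p ^ (2 * k)"
        using assms(5) absG[of w] unfolding c_def by (simp add: abs_mult)
    qed
    also have "\<dots> = c"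
      unfolding c_def V_def using p0 by (simp add: card_vecs power_mult power2_eq_square power_mult_distrib)
    finally show ?thesis using eq by linarith
  qed
  have sumE: "(\<Sum>z\<in>V. E z) = 1"
  proof -
    have "(\<Sum>z\<in>V. E z) = (\<Sum>w\<in>V. G w * (\<Sum>z\<in>V. D (vsub p k z w)))"
      unfolding E_def sum_distrib_left by (rule sum.swap)
    also have "\<dots> = (\<Sum>w\<in>V. G w * 1)"
    proof (rule sum.cong[OF refl])
      fix w assume w: "w \<in> V"
      have r1: "vsub p k (vadd p k u w) w = u" if "u \<in> V" for u
        using that w unfolding V_def by (metis vadd_comm vsub_vadd)
      have r2: "vadd p k (vsub p k z w) w = z" if "z \<in> V" for z
        using that w unfolding V_def by (metis vadd_comm vadd_vsub)
      have "(\<Sum>x\<in>V. D x) = (\<Sum>z\<in>V. D (vsub p k z w))"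
        apply (rule sum.reindex_bij_witness[where i="\<lambda>z. vsub p k z w" and j="\<lambda>u. vadd p k u w"])
        using r1 r2 vsub_in[OF p0] vadd_in[OF p0] unfolding V_def by auto
      then show "G w * (\<Sum>z\<in>V. D (vsub p k z w)) = G w * 1" using sumD by simp
    qed
    finally show ?thesis using sumG by simp
  qed
  have main: "D x = conv p k U E x" if x: "x \<in> V" for x
  proof -
    have "conv p k U E x = (\<Sum>y\<in>V. U y * (\<Sum>w\<in>V. G w * D (vsub p k (vsub p k x y) w)))"
      using conv_alt[OF p0] x unfolding V_def E_def by simp
    also have "\<dots> = (\<Sum>y\<in>V. \<Sum>v\<in>V. U y * G (vsub p k v y) * D (vsub p k x v))"
    proof (rule sum.cong[OF refl])
      fix y assume y: "y \<in> V"
      have "(\<Sum>w\<in>V. U y * G w * D (vsub p k (vsub p k x y) w))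
          = (\<Sum>v\<in>V. U y * G (vsub p k v y) * D (vsub p k x v))"
        apply (rule sum.reindex_bij_witness[where i="\<lambda>v. vsub p k v y" and j="\<lambda>w. vadd p k y w"])
        using x y unfolding V_def
        by (auto simp: vsub_in vadd_in p0 vsub_vadd vadd_vsub vsub_vsub)
      then show "U y * (\<Sum>w\<in>V. G w * D (vsub p k (vsub p k x y) w))
          = (\<Sum>v\<in>V. U y * G (vsub p k v y) * D (vsub p k x v))"
        by (simp add: sum_distrib_left mult.assoc)
    qed
    also have "\<dots> = (\<Sum>v\<in>V. conv p k U G v * D (vsub p k x v))"
    proof -
      have "(\<Sum>y\<in>V. \<Sum>v\<in>V. U y * G (vsub p k v y) * D (vsub p k x v))
          = (\<Sum>v\<in>V. \<Sum>y\<in>V. U y * G (vsub p k v y) * D (vsub p k x v))"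
        by (rule sum.swap)
      also have "\<dots> = (\<Sum>v\<in>V. (\<Sum>y\<in>V. U y * G (vsub p k v y)) * D (vsub p k x v))"
        by (simp only: sum_distrib_right)
      also have "\<dots> = (\<Sum>v\<in>V. conv p k U G v * D (vsub p k x v))"
        by (intro sum.cong refl) (simp add: conv_alt[OF p0] V_def)
      finally show ?thesis .
    qed
    also have "\<dots> = (\<Sum>v\<in>V. if v = (\<lambda>_. 0) then D (vsub p k x v) else 0)"
      unfolding U_def G_def V_def using assms(1,2) by (intro sum.cong refl) (simp add: conv_UG)
    also have "\<dots> = D x"
    proof -
      have "(\<lambda>_. 0) \<in> V" unfolding V_def vecs_def using p0 by simp
      then show ?thesis using fin x unfolding V_def by (simp add: sum.delta' vsub_zero)
    qed
    finally show ?thesis by simp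
  qed
  show ?thesis
  proof (rule exI[of _ E], intro conjI)
    show "is_distr p k E" unfolding is_distr_def using nonneg sumE unfolding V_def by blast
    show "\<forall>x\<in>vecs p k. D x = conv p k (prod_distr k U01) E x" using main unfolding V_def U_def by blast
  qed
qed

end
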